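(* Let $(X,\Sigma,\mu)$ be a probability space, let $\mathcal{P},\mathcal{Q},\mathcal{R}\subseteq\Sigma$ be countable partitions, and let $A\in\Sigma$ with $\mu(A)>0$. Then \[\mu(A)\,\mathrm{I}_{\mu_{|A}}(\mathcal{P};\mathcal{Q}\,|\,\mathcal{R})\le\log2+\mathrm{I}_\mu(\mathcal{P};\mathcal{Q}\,|\,\mathcal{R}).\]
   Context: $\mu_{|A}=\mu(A\cap\cdot)/\mu(A)$ is the conditioned measure. $\mathrm{I}_\mu(\mathcal{P};\mathcal{Q}\,|\,\mathcal{R})=\mathrm{H}_\mu(\mathcal{P}\,|\,\mathcal{R})-\mathrm{H}_\mu(\mathcal{P}\,|\,\mathcal{Q}\vee\mathcal{R})$ is conditional mutual information. *)

theory Defs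
  imports "HOL-Probability.Probability"
begin

definition countable_partition :: "'a measure \<Rightarrow> 'a set set \<Rightarrow> bool" where
  "countable_partition M P \<longleftrightarrow>
     countable P \<and> P \<subseteq> sets M \<and> disjoint P \<and> \<Union>P = space M"

definition join_partition :: "'a set set \<Rightarrow> 'a set set \<Rightarrow> 'a set set" where
  "join_partition Q R = {q \<inter> r | q r. q \<in> Q \<and> r \<in> R}"

definition eta :: "real \<Rightarrow> real" where
  "eta t = (if t \<le> 0 then 0 else - t * ln t)"

definition part_entropy :: "'a measure \<Rightarrow> 'a set set \<Rightarrow> ennreal" where
  "part_entropy M P = (\<integral>\<^sup>+ p. ennreal (eta (measure M p)) \<partial>count_space P)"

text \<open>Conditional entropy H(P|R) = sum over r in R of mu(r) H_{mu|r}(P);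
  the conditioned measure mu|r = mu(r \<inter> .)/mu(r) is uniform_measure M r.\<close>
definition cond_entropy :: "'a measure \<Rightarrow> 'a set set \<Rightarrow> 'a set set \<Rightarrow> ennreal" where
  "cond_entropy M P R =
     (\<integral>\<^sup>+ r. ennreal (measure M r) * part_entropy (uniform_measure M r) P \<partial>count_space R)"

definition cond_mutual_info ::
  "'a measure \<Rightarrow> 'a set set \<Rightarrow> 'a set set \<Rightarrow> 'a set set \<Rightarrow> ereal" where
  "cond_mutual_info M P Q R =
     enn2ereal (cond_entropy M P R) - enn2ereal (cond_entropy M P (join_partition Q R))"

end

theory Submission
  imports Defs
begin

definition lr :: "real \<Rightarrow> real \<Rightarrow> real" where
  "lr x y = (if x \<le> 0 then 0 else ln (y / x))"
definition fl :: "real \<Rightarrow> real \<Rightarrow> real" where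
  "fl x y = x * lr x y"
definition hb :: "real \<Rightarrow> real \<Rightarrow> real" where
  "hb u v = fl u (u + v) + fl v (u + v)"

lemma lr_nonneg: "0 \<le> x \<Longrightarrow> x \<le> y \<Longrightarrow> 0 \<le> lr x y"
  by (simp add: lr_def)

lemma fl_nonneg: "0 \<le> x \<Longrightarrow> x \<le> y \<Longrightarrow> 0 \<le> fl x y"
  by (simp add: fl_def lr_nonneg)

lemma fl_zero[simp]: "fl 0 y = 0"
  by (simp add: fl_def)

lemma fl_pos: "0 < x \<Longrightarrow> fl x y = x * ln (y / x)"
  by (simp add: fl_def lr_def)

lemma fl_mono2: assumes "0 \<le> x" "x \<le> y" "y \<le> y'" shows "fl x y \<le> fl x y'"
proof (cases "x = 0")
  case False
  then have "x > 0" using assms by simp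
  then show ?thesis using assms by (simp add: fl_pos mult_left_mono divide_right_mono)
qed simp

lemma fl_superadd:
  assumes "0 \<le> x1" "x1 \<le> y1" "0 \<le> x2" "x2 \<le> y2"
  shows "fl x1 y1 + fl x2 y2 \<le> fl (x1 + x2) (y1 + y2)"
proof (cases "x1 = 0")
  case True
  then show ?thesis using assms fl_mono2[of x2 y2 "y1 + y2"] by simp
next
  case n1: False
  show ?thesis
  proof (cases "x2 = 0")
    case True
    then show ?thesis using assms fl_mono2[of x1 y1 "y1 + y2"] by simp
  next
    case n2: False
    define x y where "x = x1 + x2" and "y = y1 + y2"
    have p: "x1 > 0" "x2 > 0" "y1 > 0" "y2 > 0" "x > 0" "y > 0"
      using assms n1 n2 by (auto simp: x_def y_def)
    define t1 t2 where "t1 = y1 * x / (x1 * y)" and "t2 = y2 * x / (x2 * y)"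
    have tp: "t1 > 0" "t2 > 0" using p by (auto simp: t1_def t2_def)
    have e1: "ln (y1 / x1) = ln (y / x) + ln t1"
    proof -
      have "y1 / x1 = (y / x) * t1" using p by (simp add: t1_def t2_def field_simps)
      moreover have "ln ((y / x) * t1) = ln (y / x) + ln t1" using p tp by (intro ln_mult_pos) auto
      ultimately show ?thesis by simp
    qed
    have e2: "ln (y2 / x2) = ln (y / x) + ln t2"
    proof -
      have "y2 / x2 = (y / x) * t2" using p by (simp add: t1_def t2_def field_simps)
      moreover have "ln ((y / x) * t2) = ln (y / x) + ln t2" using p tp by (intro ln_mult_pos) auto
      ultimately show ?thesis by simp
    qed
    have i1: "x1 * ln t1 \<le> x1 * (t1 - 1)"
      using tp p by (intro mult_left_mono ln_le_minus_one) auto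
    have i2: "x2 * ln t2 \<le> x2 * (t2 - 1)"
      using tp p by (intro mult_left_mono ln_le_minus_one) auto
    have s: "x1 * (t1 - 1) + x2 * (t2 - 1) = 0"
    proof -
      have a: "x1 * t1 = y1 * x / y" "x2 * t2 = y2 * x / y" using p by (simp_all add: t1_def t2_def)
      have "y1 * x / y + y2 * x / y = (y1 + y2) * x / y" by (simp add: add_divide_distrib distrib_right)
      also have "\<dots> = x" using p unfolding y_def[symmetric] by simp
      finally have "y1 * x / y + y2 * x / y = x" .
      then show ?thesis using a by (simp add: algebra_simps x_def)
    qed
    have "fl x1 y1 + fl x2 y2 = x * ln (y / x) + (x1 * ln t1 + x2 * ln t2)"
      using p by (simp add: fl_pos e1 e2 x_def y_def algebra_simps)
    also have "\<dots> \<le> x * ln (y / x)" using i1 i2 s by simp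
    also have "\<dots> = fl x y" using p by (simp add: fl_pos)
    finally show ?thesis by (simp add: x_def y_def)
  qed
qed

lemma fl_split:
  assumes "0 \<le> x1" "x1 \<le> y1" "0 \<le> x2" "x2 \<le> y2"
  shows "fl (x1 + x2) (y1 + y2) \<le> fl x1 y1 + fl x2 y2 + x1 * lr y1 (y1 + y2) + x2 * lr y2 (y1 + y2)"
proof -
  define y where "y = y1 + y2"
  have k1: "x1 * lr y1 y + fl x1 y1 = fl x1 y" if "0 \<le> x1" "x1 \<le> y1" "y1 \<le> y" for x1 y1
  proof (cases "x1 = 0")
    case False
    then have p: "x1 > 0" "y1 > 0" "y > 0" using that by auto
    have "ln (y1 / x1) + ln (y / y1) = ln (y / x1)"
      using p by (simp add: ln_div)
    then show ?thesis using p by (simp add: fl_pos lr_def algebra_simps flip: distrib_left)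
  qed simp
  have a: "fl (x1 + x2) y \<le> fl x1 y + fl x2 y"
  proof (cases "x1 + x2 = 0")
    case True
    then have "x1 = 0" "x2 = 0" using assms by auto
    then show ?thesis by simp
  next
    case False
    then have xp: "x1 + x2 > 0" using assms by simp
    have "fl (x1 + x2) y = x1 * ln (y / (x1 + x2)) + x2 * ln (y / (x1 + x2))"
      using xp by (simp add: fl_pos algebra_simps)
    also have "x1 * ln (y / (x1 + x2)) \<le> fl x1 y"
    proof (cases "x1 = 0")
      case False
      then have "x1 > 0" using assms by simp
      then show ?thesis using assms xp by (auto simp: fl_pos y_def intro!: mult_left_mono divide_left_mono)
    qed simp
    also have "x2 * ln (y / (x1 + x2)) \<le> fl x2 y"
    proof (cases "x2 = 0")
      case False
      then have "x2 > 0" using assms by simp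
      then show ?thesis using assms xp by (auto simp: fl_pos y_def intro!: mult_left_mono divide_left_mono)
    qed simp
    finally show ?thesis by simp
  qed
  show ?thesis
    using a k1[of x1 y1] k1[of x2 y2] assms by (simp add: y_def)
qed

lemma hb_superadd:
  assumes "0 \<le> u1" "0 \<le> v1" "0 \<le> u2" "0 \<le> v2"
  shows "hb u1 v1 + hb u2 v2 \<le> hb (u1 + u2) (v1 + v2)"
proof -
  have "fl u1 (u1 + v1) + fl u2 (u2 + v2) \<le> fl (u1 + u2) ((u1 + v1) + (u2 + v2))"
    using assms by (intro fl_superadd) auto
  moreover have "fl v1 (u1 + v1) + fl v2 (u2 + v2) \<le> fl (v1 + v2) ((u1 + v1) + (u2 + v2))"
    using assms by (intro fl_superadd) auto
  ultimately show ?thesis by (simp add: hb_def algebra_simps)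
qed

lemma hb_nonneg: "0 \<le> u \<Longrightarrow> 0 \<le> v \<Longrightarrow> 0 \<le> hb u v"
  by (simp add: hb_def fl_nonneg add_nonneg_nonneg)

lemma fl_le_ln2: assumes "0 \<le> u" "u \<le> y" shows "fl u y \<le> y / 2 - u + u * ln 2"
proof (cases "u = 0")
  case False
  then have p: "u > 0" "y > 0" using assms by auto
  have "ln (y / u) = ln (y / (2 * u)) + ln 2" using p by (simp add: ln_div ln_mult)
  moreover have "ln (y / (2 * u)) \<le> y / (2 * u) - 1" using p by (intro ln_le_minus_one) auto
  ultimately have "u * ln (y / u) \<le> u * (y / (2 * u) - 1 + ln 2)"
    using p by (intro mult_left_mono) auto
  also have "\<dots> = y / 2 - u + u * ln 2" using p by (simp add: field_simps)
  finally show ?thesis using p by (simp add: fl_pos)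
qed (use assms in simp)

lemma hb_le_ln2: assumes "0 \<le> u" "0 \<le> v" "u + v = 1" shows "hb u v \<le> ln 2"
proof -
  have "u * ln 2 + v * ln 2 = ln 2" using assms by (simp flip: distrib_right)
  then show ?thesis using fl_le_ln2[of u 1] fl_le_ln2[of v 1] assms by (simp add: hb_def algebra_simps)
qed

definition Hc :: "'a measure \<Rightarrow> 'a set set \<Rightarrow> 'a set \<Rightarrow> ennreal" where
  "Hc M P c = (\<integral>\<^sup>+p. ennreal (fl (measure M (p \<inter> c)) (measure M c)) \<partial>count_space P)"

lemma fl_scale: assumes "a > 0" shows "a * fl (x / a) (y / a) = fl x y"
  using assms by (simp add: fl_def lr_def divide_le_0_iff not_le)

lemma countable_partition_disj:
  assumes "countable_partition M P" "p \<in> P" "p' \<in> P" "p \<noteq> p'"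
  shows "p \<inter> p' = {}"
  using assms unfolding countable_partition_def disjoint_def by auto

context prob_space
begin

lemma conv:
  assumes "c \<in> sets M" "P \<subseteq> sets M"
  shows "ennreal (measure M c) * part_entropy (uniform_measure M c) P = Hc M P c"
proof (cases "measure M c = 0")
  case True
  have "measure M (p \<inter> c) = 0" if "p \<in> P" for p
    using finite_measure_mono[of "p \<inter> c" c] assms True by (simp add: measure_nonneg antisym)
  then have "Hc M P c = (\<integral>\<^sup>+p. 0 \<partial>count_space P)"
    unfolding Hc_def by (intro nn_integral_cong) (simp add: True)
  then show ?thesis using True by simp
next
  case False
  define m where "m = measure M c"
  have mp: "m > 0" using False measure_nonneg[of M c] unfolding m_def by linarith
  have e: "emeasure M c \<noteq> 0" "emeasure M c \<noteq> \<infinity>"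
    using mp by (simp_all add: emeasure_eq_measure m_def)
  have "part_entropy (uniform_measure M c) P =
        (\<integral>\<^sup>+p. ennreal (eta (measure M (p \<inter> c) / m)) \<partial>count_space P)"
    unfolding part_entropy_def
    using assms e by (intro nn_integral_cong) (auto simp: m_def Int_commute)
  then have "ennreal m * part_entropy (uniform_measure M c) P =
        (\<integral>\<^sup>+p. ennreal m * ennreal (eta (measure M (p \<inter> c) / m)) \<partial>count_space P)"
    by (simp add: nn_integral_cmult)
  also have "\<dots> = Hc M P c"
    unfolding Hc_def
  proof (intro nn_integral_cong)
    fix p
    define x where "x = measure M (p \<inter> c)"
    have "m * eta (x / m) = fl x m"
    proof (cases "x > 0")
      case True
      then show ?thesis using mp
        by (simp add: eta_def fl_def lr_def ln_div not_le algebra_simps divide_le_0_iff)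
    next
      case False
      then have "x = 0" using measure_nonneg[of M "p \<inter> c"] by (simp add: x_def)
      then show ?thesis by (simp add: eta_def)
    qed
    then show "ennreal m * ennreal (eta (measure M (p \<inter> c) / m)) =
        ennreal (fl (measure M (p \<inter> c)) (measure M c))"
      using mp by (simp add: ennreal_mult'[symmetric] x_def m_def)
  qed
  finally show ?thesis by (simp add: m_def)
qed

end

context prob_space begin
lemma sumP:
  assumes "countable_partition M P" "Z \<in> sets M"
  shows "(\<integral>\<^sup>+p. ennreal (measure M (p \<inter> Z)) \<partial>count_space P) = ennreal (measure M Z)"
proof -
  have cP: "countable P" "P \<subseteq> sets M" "\<Union>P = space M"
    using assms(1) by (auto simp: countable_partition_def)
  have "(\<Union>p\<in>P. p \<inter> Z) = Z" using cP sets.sets_into_space[OF assms(2)] by auto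
  moreover have "emeasure M (\<Union>p\<in>P. p \<inter> Z) = (\<integral>\<^sup>+p. emeasure M (p \<inter> Z) \<partial>count_space P)"
  proof (rule emeasure_UN_countable)
    show "disjoint_family_on (\<lambda>p. p \<inter> Z) P"
      unfolding disjoint_family_on_def using countable_partition_disj[OF assms(1)] by blast
  qed (use cP assms in auto)
  ultimately show ?thesis by (simp add: emeasure_eq_measure)
qed

end

context prob_space begin
lemma GC:
  fixes G :: "'a set \<Rightarrow> real" and X :: "'i \<Rightarrow> 'a set"
  assumes super: "\<And>Z1 Z2. Z1 \<in> sets M \<Longrightarrow> Z2 \<in> sets M \<Longrightarrow> Z1 \<inter> Z2 = {} \<Longrightarrow> G Z1 + G Z2 \<le> G (Z1 \<union> Z2)"
    and nonneg: "\<And>Z. Z \<in> sets M \<Longrightarrow> 0 \<le> G Z"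
    and I: "countable I" and X: "\<And>i. i \<in> I \<Longrightarrow> X i \<in> sets M" and disj: "disjoint_family_on X I"
    and E: "E \<in> sets M" "\<And>i. i \<in> I \<Longrightarrow> X i \<subseteq> E"
  shows "(\<integral>\<^sup>+i. ennreal (G (X i)) \<partial>count_space I) \<le> ennreal (G E)"
proof -
  have fin: "(\<Sum>i\<in>F. G (X i)) \<le> G (\<Union>i\<in>F. X i)" if "finite F" "F \<subseteq> I" for F
    using that
  proof (induction F rule: finite_induct)
    case empty
    then show ?case using nonneg[of "{}"] by simp
  next
    case (insert i F)
    have "X i \<inter> X j = {}" if "j \<in> F" for j
    proof -
      have "i \<in> I" "j \<in> I" "i \<noteq> j" using insert.prems insert.hyps(2) that by auto
      then show ?thesis using disj unfolding disjoint_family_on_def by blast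
    qed
    then have "X i \<inter> (\<Union>j\<in>F. X j) = {}" by blast
    moreover have "(\<Union>j\<in>F. X j) \<in> sets M" using insert X by (intro sets.finite_UN) auto
    ultimately have "G (X i) + G (\<Union>j\<in>F. X j) \<le> G (X i \<union> (\<Union>j\<in>F. X j))"
      using insert X by (intro super) auto
    then show ?case using insert by simp
  qed
  have fin2: "(\<Sum>i\<in>F. ennreal (G (X i))) \<le> ennreal (G E)" if "finite F" "F \<subseteq> I" for F
  proof -
    define U where "U = (\<Union>i\<in>F. X i)"
    have U: "U \<in> sets M" "U \<subseteq> E" using that X E by (auto simp: U_def intro!: sets.finite_UN)
    have "(\<Sum>i\<in>F. G (X i)) \<le> G U" using fin[OF that] by (simp add: U_def)
    also have "\<dots> \<le> G U + G (E - U)" using nonneg[of "E - U"] U E by auto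
    also have "\<dots> \<le> G (U \<union> (E - U))" using U E by (intro super) auto
    also have "U \<union> (E - U) = E" using U by auto
    finally have le: "(\<Sum>i\<in>F. G (X i)) \<le> G E" .
    have "(\<Sum>i\<in>F. ennreal (G (X i))) = ennreal (\<Sum>i\<in>F. G (X i))"
      by (rule sum_ennreal) (use nonneg X that in auto)
    then show ?thesis using le by (simp add: ennreal_leI)
  qed
  show ?thesis
  proof (cases "finite I")
    case True
    then show ?thesis using fin2 by (simp add: nn_integral_count_space_finite)
  next
    case False
    note b = bij_betw_from_nat_into[OF I False]
    have "(\<integral>\<^sup>+i. ennreal (G (X i)) \<partial>count_space I) =
          (\<integral>\<^sup>+n. ennreal (G (X (from_nat_into I n))) \<partial>count_space UNIV)"
      by (simp add: nn_integral_bij_count_space[symmetric, OF b])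
    also have "\<dots> = (\<Sum>n. ennreal (G (X (from_nat_into I n))))"
      by (rule nn_integral_count_space_nat)
    also have "\<dots> \<le> ennreal (G E)"
    proof (rule suminf_le_const)
      fix n
      have inj: "inj_on (from_nat_into I) {..<n}"
        using b by (auto simp: bij_betw_def intro: inj_on_subset)
      have "(\<Sum>k<n. ennreal (G (X (from_nat_into I k)))) = (\<Sum>i\<in>from_nat_into I ` {..<n}. ennreal (G (X i)))"
        using sum.reindex[OF inj, of "\<lambda>i. ennreal (G (X i))"] by simp
      also have "\<dots> \<le> ennreal (G E)"
        using b by (intro fin2) (auto simp: bij_betw_def)
      finally show "(\<Sum>k<n. ennreal (G (X (from_nat_into I k)))) \<le> ennreal (G E)" .
    qed simp
    finally show ?thesis .
  qed
qed

end

context prob_space begin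
lemma Gp_super:
  assumes "p \<in> sets M" "Z1 \<in> sets M" "Z2 \<in> sets M" "Z1 \<inter> Z2 = {}"
  shows "fl (measure M (p \<inter> Z1)) (measure M Z1) + fl (measure M (p \<inter> Z2)) (measure M Z2)
     \<le> fl (measure M (p \<inter> (Z1 \<union> Z2))) (measure M (Z1 \<union> Z2))"
proof -
  have "measure M (Z1 \<union> Z2) = measure M Z1 + measure M Z2"
    using assms by (intro finite_measure_Union) auto
  moreover have "measure M (p \<inter> (Z1 \<union> Z2)) = measure M (p \<inter> Z1) + measure M (p \<inter> Z2)"
  proof -
    have "p \<inter> (Z1 \<union> Z2) = (p \<inter> Z1) \<union> (p \<inter> Z2)" by auto
    moreover have "measure M ((p \<inter> Z1) \<union> (p \<inter> Z2)) = measure M (p \<inter> Z1) + measure M (p \<inter> Z2)"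
      using assms by (intro finite_measure_Union) auto
    ultimately show ?thesis by simp
  qed
  moreover have "measure M (p \<inter> Z1) \<le> measure M Z1" "measure M (p \<inter> Z2) \<le> measure M Z2"
    using assms by (auto intro!: finite_measure_mono)
  ultimately show ?thesis 
    using fl_superadd[of "measure M (p \<inter> Z1)" "measure M Z1" "measure M (p \<inter> Z2)" "measure M Z2"]
    by simp
qed


lemma Gp_nonneg: "p \<in> sets M \<Longrightarrow> Z \<in> sets M \<Longrightarrow> 0 \<le> fl (measure M (p \<inter> Z)) (measure M Z)"
  by (intro fl_nonneg) (auto intro!: finite_measure_mono)

lemma Hc_super:
  assumes P: "countable_partition M P" and Z: "Z1 \<in> sets M" "Z2 \<in> sets M" "Z1 \<inter> Z2 = {}"
  shows "Hc M P Z1 + Hc M P Z2 \<le> Hc M P (Z1 \<union> Z2)"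
proof -
  have Ps: "P \<subseteq> sets M" using P by (simp add: countable_partition_def)
  have "Hc M P Z1 + Hc M P Z2 = (\<integral>\<^sup>+p. ennreal (fl (measure M (p \<inter> Z1)) (measure M Z1)) +
            ennreal (fl (measure M (p \<inter> Z2)) (measure M Z2)) \<partial>count_space P)"
    unfolding Hc_def by (rule nn_integral_add[symmetric]) auto
  also have "\<dots> \<le> Hc M P (Z1 \<union> Z2)"
    unfolding Hc_def
  proof (intro nn_integral_mono)
    fix p assume "p \<in> space (count_space P)"
    then have p: "p \<in> sets M" using Ps by auto
    show "ennreal (fl (measure M (p \<inter> Z1)) (measure M Z1)) + ennreal (fl (measure M (p \<inter> Z2)) (measure M Z2))
       \<le> ennreal (fl (measure M (p \<inter> (Z1 \<union> Z2))) (measure M (Z1 \<union> Z2)))"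
      using Gp_super[OF p Z] Gp_nonneg[OF p Z(1)] Gp_nonneg[OF p Z(2)]
      by (simp add: ennreal_plus[symmetric] del: ennreal_plus)
  qed
  finally show ?thesis .
qed

lemma Hc_group:
  fixes X :: "'i \<Rightarrow> 'a set"
  assumes P: "countable_partition M P"
    and I: "countable I" and X: "\<And>i. i \<in> I \<Longrightarrow> X i \<in> sets M" and disj: "disjoint_family_on X I"
    and E: "E \<in> sets M" "\<And>i. i \<in> I \<Longrightarrow> X i \<subseteq> E"
  shows "(\<integral>\<^sup>+i. Hc M P (X i) \<partial>count_space I) \<le> Hc M P E"
proof -
  have Ps: "P \<subseteq> sets M" using P by (simp add: countable_partition_def)
  have "(\<integral>\<^sup>+i. Hc M P (X i) \<partial>count_space I) =
     (\<integral>\<^sup>+p. \<integral>\<^sup>+i. ennreal (fl (measure M (p \<inter> X i)) (measure M (X i))) \<partial>count_space I \<partial>count_space P)"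
    unfolding Hc_def by (rule nn_integral_count_space_nn_integral[symmetric, OF I]) auto
  also have "\<dots> \<le> Hc M P E"
    unfolding Hc_def
  proof (intro nn_integral_mono)
    fix p assume "p \<in> space (count_space P)"
    then have p: "p \<in> sets M" using Ps by auto
    show "(\<integral>\<^sup>+i. ennreal (fl (measure M (p \<inter> X i)) (measure M (X i))) \<partial>count_space I)
       \<le> ennreal (fl (measure M (p \<inter> E)) (measure M E))"
      by (rule GC[where G="\<lambda>Z. fl (measure M (p \<inter> Z)) (measure M Z)", OF _ _ I X disj E])
         (use Gp_super[OF p] Gp_nonneg[OF p] in auto)
  qed
  finally show ?thesis .
qed

lemma Hc_decomp:
  assumes P: "countable_partition M P" and c: "c \<in> sets M" and A: "A \<in> sets M"
  shows "Hc M P c \<le> Hc M P (c \<inter> A) + Hc M P (c - A) + ennreal (hb (measure M (c \<inter> A)) (measure M (c - A)))"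
proof -
  have Ps: "P \<subseteq> sets M" using P by (simp add: countable_partition_def)
  define y1 y2 where "y1 = measure M (c \<inter> A)" and "y2 = measure M (c - A)"
  define L1 L2 where "L1 = lr y1 (y1 + y2)" and "L2 = lr y2 (y1 + y2)"
  have y: "y1 + y2 = measure M c"
  proof -
    have "c = (c \<inter> A) \<union> (c - A)" by auto
    then have "measure M c = measure M ((c \<inter> A) \<union> (c - A))" by simp
    also have "\<dots> = y1 + y2" unfolding y1_def y2_def using c A by (intro finite_measure_Union) auto
    finally show ?thesis by simp
  qed
  have yn: "0 \<le> y1" "0 \<le> y2" by (simp_all add: y1_def y2_def)
  have Ln: "0 \<le> L1" "0 \<le> L2" using yn by (auto simp: L1_def L2_def intro!: lr_nonneg)
  let ?f1 = "\<lambda>p. ennreal (fl (measure M (p \<inter> (c \<inter> A))) (measure M (c \<inter> A)))"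
  let ?f2 = "\<lambda>p. ennreal (fl (measure M (p \<inter> (c - A))) (measure M (c - A)))"
  let ?g1 = "\<lambda>p. ennreal (measure M (p \<inter> (c \<inter> A))) * ennreal L1"
  let ?g2 = "\<lambda>p. ennreal (measure M (p \<inter> (c - A))) * ennreal L2"
  have "Hc M P c \<le> (\<integral>\<^sup>+p. ?f1 p + ?f2 p + ?g1 p + ?g2 p \<partial>count_space P)"
    unfolding Hc_def
  proof (intro nn_integral_mono)
    fix p assume "p \<in> space (count_space P)"
    then have p: "p \<in> sets M" using Ps by auto
    define x1 x2 where "x1 = measure M (p \<inter> (c \<inter> A))" and "x2 = measure M (p \<inter> (c - A))"
    have x: "x1 + x2 = measure M (p \<inter> c)"
    proof -
      have "p \<inter> c = (p \<inter> (c \<inter> A)) \<union> (p \<inter> (c - A))" by auto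
      then have "measure M (p \<inter> c) = measure M ((p \<inter> (c \<inter> A)) \<union> (p \<inter> (c - A)))" by simp
      also have "\<dots> = x1 + x2" unfolding x1_def x2_def using p c A by (intro finite_measure_Union) auto
      finally show ?thesis by simp
    qed
    have xn: "0 \<le> x1" "x1 \<le> y1" "0 \<le> x2" "x2 \<le> y2"
      using p c A by (auto simp: x1_def x2_def y1_def y2_def intro!: finite_measure_mono)
    have "fl (measure M (p \<inter> c)) (measure M c) \<le> fl x1 y1 + fl x2 y2 + x1 * L1 + x2 * L2"
      using fl_split[OF xn] x y by (simp add: L1_def L2_def)
    moreover have "0 \<le> fl x1 y1" "0 \<le> fl x2 y2" "0 \<le> x1 * L1" "0 \<le> x2 * L2"
      using xn Ln by (auto intro!: fl_nonneg)
    ultimately show "ennreal (fl (measure M (p \<inter> c)) (measure M c)) \<le> ?f1 p + ?f2 p + ?g1 p + ?g2 p"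
      using xn Ln unfolding x1_def[symmetric] x2_def[symmetric] y1_def[symmetric] y2_def[symmetric]
      by (simp add: ennreal_plus[symmetric] ennreal_mult[symmetric] ennreal_leI del: ennreal_plus)
  qed
  also have "\<dots> = (\<integral>\<^sup>+p. ?f1 p \<partial>count_space P) + (\<integral>\<^sup>+p. ?f2 p \<partial>count_space P)
       + (\<integral>\<^sup>+p. ?g1 p \<partial>count_space P) + (\<integral>\<^sup>+p. ?g2 p \<partial>count_space P)"
    by (simp add: nn_integral_add)
  also have "(\<integral>\<^sup>+p. ?g1 p \<partial>count_space P) = ennreal y1 * ennreal L1"
    using sumP[OF P, of "c \<inter> A"] c A by (simp add: nn_integral_multc y1_def)
  also have "(\<integral>\<^sup>+p. ?g2 p \<partial>count_space P) = ennreal y2 * ennreal L2"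
    using sumP[OF P, of "c - A"] c A by (simp add: nn_integral_multc y2_def)
  also have "(\<integral>\<^sup>+p. ?f1 p \<partial>count_space P) + (\<integral>\<^sup>+p. ?f2 p \<partial>count_space P)
       + ennreal y1 * ennreal L1 + ennreal y2 * ennreal L2
     = Hc M P (c \<inter> A) + Hc M P (c - A) + (ennreal y1 * ennreal L1 + ennreal y2 * ennreal L2)"
    by (simp add: Hc_def add.assoc)
  also have "(ennreal y1 * ennreal L1 + ennreal y2 * ennreal L2) = ennreal (hb y1 y2)"
    using yn Ln by (simp add: hb_def fl_def L1_def L2_def ennreal_plus[symmetric] ennreal_mult[symmetric]
        mult_nonneg_nonneg del: ennreal_plus)
  finally show ?thesis by (simp add: y1_def y2_def)
qed

lemma Hh_group:
  assumes S: "countable S" "S \<subseteq> sets M" "disjoint S" and A: "A \<in> sets M"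
  shows "(\<integral>\<^sup>+c. ennreal (hb (measure M (c \<inter> A)) (measure M (c - A))) \<partial>count_space S) \<le> ennreal (ln 2)"
proof -
  have "(\<integral>\<^sup>+c. ennreal (hb (measure M (c \<inter> A)) (measure M (c - A))) \<partial>count_space S)
     \<le> ennreal (hb (measure M (space M \<inter> A)) (measure M (space M - A)))"
  proof (rule GC[where G="\<lambda>Z. hb (measure M (Z \<inter> A)) (measure M (Z - A))" and X="\<lambda>c. c", OF _ _ S(1)])
    fix Z1 Z2 assume Z: "Z1 \<in> sets M" "Z2 \<in> sets M" "Z1 \<inter> Z2 = {}"
    have "measure M ((Z1 \<union> Z2) \<inter> A) = measure M (Z1 \<inter> A) + measure M (Z2 \<inter> A)"
    proof -
      have "(Z1 \<union> Z2) \<inter> A = (Z1 \<inter> A) \<union> (Z2 \<inter> A)" by auto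
      moreover have "measure M ((Z1 \<inter> A) \<union> (Z2 \<inter> A)) = measure M (Z1 \<inter> A) + measure M (Z2 \<inter> A)"
        using Z A by (intro finite_measure_Union) auto
      ultimately show ?thesis by simp
    qed
    moreover have "measure M ((Z1 \<union> Z2) - A) = measure M (Z1 - A) + measure M (Z2 - A)"
    proof -
      have "(Z1 \<union> Z2) - A = (Z1 - A) \<union> (Z2 - A)" by auto
      moreover have "measure M ((Z1 - A) \<union> (Z2 - A)) = measure M (Z1 - A) + measure M (Z2 - A)"
        using Z A by (intro finite_measure_Union) auto
      ultimately show ?thesis by simp
    qed
    ultimately show "hb (measure M (Z1 \<inter> A)) (measure M (Z1 - A)) + hb (measure M (Z2 \<inter> A)) (measure M (Z2 - A))
        \<le> hb (measure M ((Z1 \<union> Z2) \<inter> A)) (measure M ((Z1 \<union> Z2) - A))"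
      by (simp add: hb_superadd)
  next
    show "disjoint_family_on (\<lambda>c. c) S"
      using S(3) unfolding disjoint_family_on_def disjoint_def by blast
  qed (use S A sets.sets_into_space in \<open>auto intro!: hb_nonneg\<close>)
  also have "\<dots> \<le> ennreal (ln 2)"
  proof (intro ennreal_leI hb_le_ln2)
    have "measure M (space M \<inter> A) = measure M A" using A sets.sets_into_space[OF A] by (simp add: Int_absorb1)
    then show "measure M (space M \<inter> A) + measure M (space M - A) = 1"
      using prob_compl[OF A] by simp
  qed auto
  finally show ?thesis .
qed
end

lemma join_countable:
  assumes "countable Q" "countable R" shows "countable (join_partition Q R)"
proof -
  have "join_partition Q R = (\<lambda>(q, r). q \<inter> r) ` (Q \<times> R)"
    unfolding join_partition_def by auto
  then show ?thesis using assms by simp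
qed

lemma join_disjoint:
  assumes "disjoint Q" "disjoint R" shows "disjoint (join_partition Q R)"
  unfolding disjoint_def join_partition_def
proof (clarify)
  fix q1 r1 q2 r2
  assume h: "q1 \<in> Q" "r1 \<in> R" "q2 \<in> Q" "r2 \<in> R" "q1 \<inter> r1 \<noteq> q2 \<inter> r2"
  then have "q1 \<noteq> q2 \<or> r1 \<noteq> r2" by auto
  then have "q1 \<inter> q2 = {} \<or> r1 \<inter> r2 = {}"
  proof
    assume "q1 \<noteq> q2" then show ?thesis using assms(1) h(1,3) unfolding disjoint_def by simp
  next
    assume "r1 \<noteq> r2" then show ?thesis using assms(2) h(2,4) unfolding disjoint_def by simp
  qed
  then show "q1 \<inter> r1 \<inter> (q2 \<inter> r2) = {}" by blast
qed

context prob_space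
begin

lemma ce_M:
  assumes "T \<subseteq> sets M" "P \<subseteq> sets M"
  shows "cond_entropy M P T = (\<integral>\<^sup>+r. Hc M P r \<partial>count_space T)"
  unfolding cond_entropy_def using assms by (intro nn_integral_cong) (auto intro!: conv)

lemma grouping:
  assumes P: "countable_partition M P" and Q: "countable_partition M Q" and R: "countable_partition M R"
    and B: "B \<in> sets M"
  shows "(\<integral>\<^sup>+c. Hc M P (c \<inter> B) \<partial>count_space (join_partition Q R))
     \<le> (\<integral>\<^sup>+r. Hc M P (r \<inter> B) \<partial>count_space R)"
proof -
  let ?S = "join_partition Q R"
  have Qs: "countable Q" "Q \<subseteq> sets M" "disjoint Q" using Q by (auto simp: countable_partition_def)
  have Rs: "countable R" "R \<subseteq> sets M" "disjoint R" using R by (auto simp: countable_partition_def)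
  have Sc: "countable ?S" using Qs Rs by (intro join_countable)
  have Ss: "?S \<subseteq> sets M" using Qs Rs unfolding join_partition_def by auto
  have Sd: "disjoint ?S" using Qs Rs by (intro join_disjoint)
  define X where "X r c = (if c \<subseteq> r then c \<inter> B else {})" for r c :: "'a set"
  have "(\<integral>\<^sup>+c. Hc M P (c \<inter> B) \<partial>count_space ?S)
     \<le> (\<integral>\<^sup>+c. \<integral>\<^sup>+r. Hc M P (X r c) \<partial>count_space R \<partial>count_space ?S)"
  proof (intro nn_integral_mono)
    fix c assume "c \<in> space (count_space ?S)"
    then obtain q r0 where "c = q \<inter> r0" "r0 \<in> R" unfolding join_partition_def by auto
    then have "Hc M P (c \<inter> B) = Hc M P (X r0 c)" by (simp add: X_def)
    also have "\<dots> \<le> (\<integral>\<^sup>+r. Hc M P (X r c) \<partial>count_space R)"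
      by (rule nn_integral_ge_point) fact
    finally show "Hc M P (c \<inter> B) \<le> (\<integral>\<^sup>+r. Hc M P (X r c) \<partial>count_space R)" .
  qed
  also have "\<dots> = (\<integral>\<^sup>+r. \<integral>\<^sup>+c. Hc M P (X r c) \<partial>count_space ?S \<partial>count_space R)"
    by (rule nn_integral_count_space_nn_integral[OF Rs(1)]) auto
  also have "\<dots> \<le> (\<integral>\<^sup>+r. Hc M P (r \<inter> B) \<partial>count_space R)"
  proof (intro nn_integral_mono)
    fix r assume "r \<in> space (count_space R)"
    then have r: "r \<in> sets M" using Rs by auto
    show "(\<integral>\<^sup>+c. Hc M P (X r c) \<partial>count_space ?S) \<le> Hc M P (r \<inter> B)"
    proof (rule Hc_group[OF P Sc])
      show "X r c \<in> sets M" if "c \<in> ?S" for c using that Ss B by (auto simp: X_def)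
      show "r \<inter> B \<in> sets M" using r B by auto
      show "X r c \<subseteq> r \<inter> B" if "c \<in> ?S" for c by (auto simp: X_def)
      show "disjoint_family_on (X r) ?S"
        unfolding disjoint_family_on_def
      proof (intro ballI impI)
        fix c1 c2 assume "c1 \<in> ?S" "c2 \<in> ?S" "c1 \<noteq> c2"
        then have "c1 \<inter> c2 = {}" using Sd unfolding disjoint_def by simp
        then show "X r c1 \<inter> X r c2 = {}" by (auto simp: X_def)
      qed
    qed
  qed
  finally show ?thesis .
qed

end

theorem mainTheorem15:
  fixes M :: "'a measure" and P Q R :: "'a set set" and A :: "'a set"
  assumes "prob_space M"
    and "countable_partition M P" and "countable_partition M Q" and "countable_partition M R"
    and "A \<in> sets M" and "measure M A > 0"
  shows "ereal (measure M A) * cond_mutual_info (uniform_measure M A) P Q R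
           \<le> ereal (ln 2) + cond_mutual_info M P Q R"
proof -
  interpret prob_space M by fact
  note P = assms(2) and Q = assms(3) and R = assms(4) and A = assms(5)
  define a where "a = measure M A"
  have ap: "a > 0" using assms(6) by (simp add: a_def)
  define N where "N = uniform_measure M A"
  have eA: "emeasure M A \<noteq> 0" "emeasure M A \<noteq> \<infinity>"
    using ap by (simp_all add: emeasure_eq_measure a_def)
  have probN: "prob_space N" unfolding N_def using eA by (rule prob_space_uniform_measure)
  have sN: "sets N = sets M" by (simp add: N_def)
  have mN: "measure N X = measure M (A \<inter> X) / a" if "X \<in> sets M" for X
    using eA that by (simp add: N_def a_def)
  let ?S = "join_partition Q R"
  have Ps: "P \<subseteq> sets M" using P by (simp add: countable_partition_def)
  have Qs: "countable Q" "Q \<subseteq> sets M" "disjoint Q" using Q by (auto simp: countable_partition_def)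
  have Rs: "countable R" "R \<subseteq> sets M" "disjoint R" using R by (auto simp: countable_partition_def)
  have Sc: "countable ?S" using Qs Rs by (intro join_countable)
  have Ss: "?S \<subseteq> sets M" using Qs Rs unfolding join_partition_def by auto
  have Sd: "disjoint ?S" using Qs Rs by (intro join_disjoint)
  have HcN: "ennreal a * Hc N P c = Hc M P (c \<inter> A)" if c: "c \<in> sets M" for c
  proof -
    have "ennreal a * Hc N P c =
       (\<integral>\<^sup>+p. ennreal a * ennreal (fl (measure N (p \<inter> c)) (measure N c)) \<partial>count_space P)"
      unfolding Hc_def by (simp add: nn_integral_cmult)
    also have "\<dots> = Hc M P (c \<inter> A)"
      unfolding Hc_def
    proof (intro nn_integral_cong)
      fix p assume "p \<in> space (count_space P)"
      then have p: "p \<in> sets M" using Ps by auto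
      have "a * fl (measure N (p \<inter> c)) (measure N c) = fl (measure M (p \<inter> (c \<inter> A))) (measure M (c \<inter> A))"
        using mN[of "p \<inter> c"] mN[of c] p c fl_scale[OF ap]
        by (simp add: Int_ac)
      then show "ennreal a * ennreal (fl (measure N (p \<inter> c)) (measure N c)) =
          ennreal (fl (measure M (p \<inter> (c \<inter> A))) (measure M (c \<inter> A)))"
        using ap by (simp add: ennreal_mult'[symmetric])
    qed
    finally show ?thesis .
  qed
  have ceN: "ennreal a * cond_entropy N P T = (\<integral>\<^sup>+r. Hc M P (r \<inter> A) \<partial>count_space T)"
    if T: "T \<subseteq> sets M" for T
  proof -
    have "cond_entropy N P T = (\<integral>\<^sup>+r. Hc N P r \<partial>count_space T)"
      using prob_space.ce_M[OF probN, of T P] T Ps sN by simp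
    then have "ennreal a * cond_entropy N P T = (\<integral>\<^sup>+r. ennreal a * Hc N P r \<partial>count_space T)"
      by (simp add: nn_integral_cmult)
    also have "\<dots> = (\<integral>\<^sup>+r. Hc M P (r \<inter> A) \<partial>count_space T)"
      using T by (intro nn_integral_cong) (auto intro!: HcN)
    finally show ?thesis .
  qed
  define HR where "HR = (\<integral>\<^sup>+r. Hc M P r \<partial>count_space R)"
  define HS where "HS = (\<integral>\<^sup>+c. Hc M P c \<partial>count_space ?S)"
  define HRA where "HRA = (\<integral>\<^sup>+r. Hc M P (r \<inter> A) \<partial>count_space R)"
  define HSA where "HSA = (\<integral>\<^sup>+c. Hc M P (c \<inter> A) \<partial>count_space ?S)"
  define HRB where "HRB = (\<integral>\<^sup>+r. Hc M P (r - A) \<partial>count_space R)"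
  define HSB where "HSB = (\<integral>\<^sup>+c. Hc M P (c - A) \<partial>count_space ?S)"
  define Hh where "Hh = (\<integral>\<^sup>+c. ennreal (hb (measure M (c \<inter> A)) (measure M (c - A))) \<partial>count_space ?S)"
  have ceR: "cond_entropy M P R = HR" unfolding HR_def using Rs Ps by (intro ce_M) auto
  have ceS: "cond_entropy M P ?S = HS" unfolding HS_def using Ss Ps by (intro ce_M) auto
  have ceNR: "ennreal a * cond_entropy N P R = HRA" unfolding HRA_def using Rs by (intro ceN) auto
  have ceNS: "ennreal a * cond_entropy N P ?S = HSA" unfolding HSA_def using Ss by (intro ceN) auto
  have ka: "HRA + HRB \<le> HR"
  proof -
    have "HRA + HRB = (\<integral>\<^sup>+r. Hc M P (r \<inter> A) + Hc M P (r - A) \<partial>count_space R)"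
      unfolding HRA_def HRB_def by (rule nn_integral_add[symmetric]) auto
    also have "\<dots> \<le> HR"
      unfolding HR_def
    proof (intro nn_integral_mono)
      fix r assume "r \<in> space (count_space R)"
      then have r: "r \<in> sets M" using Rs by auto
      have "Hc M P (r \<inter> A) + Hc M P (r - A) \<le> Hc M P ((r \<inter> A) \<union> (r - A))"
        using r A by (intro Hc_super[OF P]) auto
      also have "(r \<inter> A) \<union> (r - A) = r" by auto
      finally show "Hc M P (r \<inter> A) + Hc M P (r - A) \<le> Hc M P r" .
    qed
    finally show ?thesis .
  qed
  have kb: "HS \<le> HSA + HSB + Hh"
  proof -
    have "HS \<le> (\<integral>\<^sup>+c. Hc M P (c \<inter> A) + Hc M P (c - A) + ennreal (hb (measure M (c \<inter> A)) (measure M (c - A))) \<partial>count_space ?S)"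
      unfolding HS_def
    proof (intro nn_integral_mono)
      fix c assume "c \<in> space (count_space ?S)"
      then have c: "c \<in> sets M" using Ss by auto
      show "Hc M P c \<le> Hc M P (c \<inter> A) + Hc M P (c - A) + ennreal (hb (measure M (c \<inter> A)) (measure M (c - A)))"
        by (rule Hc_decomp[OF P c A])
    qed
    also have "\<dots> = HSA + HSB + Hh"
      unfolding HSA_def HSB_def Hh_def by (simp add: nn_integral_add)
    finally show ?thesis .
  qed
  have kcA: "HSA \<le> HRA" unfolding HSA_def HRA_def by (rule grouping[OF P Q R A])
  have kcB: "HSB \<le> HRB"
  proof -
    have B: "space M - A \<in> sets M" using A by auto
    have e1: "c - A = c \<inter> (space M - A)" if "c \<in> sets M" for c
      using sets.sets_into_space[OF that] by auto
    have "HSB = (\<integral>\<^sup>+c. Hc M P (c \<inter> (space M - A)) \<partial>count_space ?S)"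
      unfolding HSB_def
    proof (intro nn_integral_cong)
      fix c assume "c \<in> space (count_space ?S)"
      then have "c \<in> sets M" using Ss by auto
      then show "Hc M P (c - A) = Hc M P (c \<inter> (space M - A))" by (subst e1) auto
    qed
    also have "\<dots> \<le> (\<integral>\<^sup>+r. Hc M P (r \<inter> (space M - A)) \<partial>count_space R)"
      by (rule grouping[OF P Q R B])
    also have "\<dots> = HRB"
      unfolding HRB_def
    proof (intro nn_integral_cong)
      fix c assume "c \<in> space (count_space R)"
      then have "c \<in> sets M" using Rs by auto
      then show "Hc M P (c \<inter> (space M - A)) = Hc M P (c - A)" by (subst e1) auto
    qed
    finally show ?thesis .
  qed
  have kd: "Hh \<le> ennreal (ln 2)" unfolding Hh_def by (rule Hh_group[OF Sc Ss Sd A])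
  have K: "HRA + HS \<le> HR + HSA + ennreal (ln 2)"
  proof -
    have "HRA + HS \<le> HRA + (HSA + HSB + Hh)" by (rule add_left_mono[OF kb])
    also have "\<dots> \<le> HRA + (HSA + HRB + ennreal (ln 2))"
      by (intro add_left_mono add_mono kcB kd order.refl)
    also have "\<dots> = (HRA + HRB) + HSA + ennreal (ln 2)" by (simp add: ac_simps)
    also have "\<dots> \<le> HR + HSA + ennreal (ln 2)" by (intro add_right_mono ka)
    finally show ?thesis .
  qed
  have ln2: "0 \<le> ln (2::real)" by simp
  show ?thesis
  proof (cases "HR = \<top>")
    case True
    then show ?thesis
      unfolding cond_mutual_info_def ceR ceS N_def[symmetric] by simp
  next
    case False
    have "HRA \<le> HR" using ka by (metis add.commute le_iff_add order_trans)
    then have fRA: "HRA \<noteq> \<top>" using False by (auto simp: top_unique)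
    have fSA: "HSA \<noteq> \<top>" using kcA fRA by (auto simp: top_unique)
    have "HS \<le> HR + HSA + ennreal (ln 2)" using K by (metis add.commute le_iff_add order_trans)
    then have fS: "HS \<noteq> \<top>" using False fSA by (auto simp: top_unique ennreal_add_eq_top)
    obtain hr where hr: "HR = ennreal hr" "0 \<le> hr" using False by (cases HR) auto
    obtain hs where hs: "HS = ennreal hs" "0 \<le> hs" using fS by (cases HS) auto
    obtain x where x: "cond_entropy N P R = ennreal x" "0 \<le> x"
      using fRA ceNR ap by (cases "cond_entropy N P R") (auto simp: ennreal_mult_top)
    obtain y where y: "cond_entropy N P ?S = ennreal y" "0 \<le> y"
      using fSA ceNS ap by (cases "cond_entropy N P ?S") (auto simp: ennreal_mult_top)
    have hra: "HRA = ennreal (a * x)" using ceNR x ap by (simp add: ennreal_mult)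
    have hsa: "HSA = ennreal (a * y)" using ceNS y ap by (simp add: ennreal_mult)
    have "ennreal (a * x + hs) \<le> ennreal (hr + a * y + ln 2)"
      using K ap x y hr hs unfolding hra hsa
      by (simp add: ennreal_plus[symmetric] del: ennreal_plus)
    then have real: "a * x + hs \<le> hr + a * y + ln 2"
      using ap x y hr hs ln2 by (subst (asm) ennreal_le_iff) auto
    have "ereal a * (ereal x - ereal y) \<le> ereal (ln 2) + (ereal hr - ereal hs)"
      using real by (simp add: algebra_simps)
    then show ?thesis
      unfolding cond_mutual_info_def ceR ceS N_def[symmetric] a_def[symmetric]
      using x y hr hs by simp
  qed
qed

end
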